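(* Let $\mathcal A\in\mathbb R^{n\times p\times l}$ with $n\ge p$, and let $\mathcal A=\mathcal U*\mathcal S*\mathcal V^\top$ be a compact t-SVD of $\mathcal A$. Then $\mathcal P=\mathcal U*\mathcal V^\top$ (the $\mathcal P$-factor of the t-polar decomposition of $\mathcal A$) is an optimal solution of $\max_{\mathcal P\in\mathrm{St}(n,p,l)}\langle\mathcal A,\mathcal P\rangle$.
   Context: Frontal slices $A^{(i)}=\mathcal A(:,:,i)$. The t-product is $\mathcal A*\mathcal B=\operatorname{fold}(\operatorname{bcirc}(\mathcal A)\operatorname{unfold}(\mathcal B))$, where $\operatorname{bcirc}(\mathcal A)$ is the block circulant matrix with $(i,j)$ block $A^{(((i-j)\bmod l)+1)}$, $\operatorname{unfold}$ stacks frontal slices vertically, $\operatorname{fold}$ is its inverse. Transpose: $\mathcal A^\top$ has frontal slices $(A^{(1)})^\top,(A^{(l)})^\top,\dots,(A^{(2)})^\top$. $\mathcal I$ identity tensor. $\mathrm{St}(n,p,l)=\{\mathcal X\in\mathbb R^{n\times p\times l}:\mathcal X^\top*\mathcal X=\mathcal I\}$; a tensor $\mathcal V\in\mathbb R^{p\times p\times l}$ is orthogonal if $\mathcal V^\top*\mathcal V=\mathcal V*\mathcal V^\top=\mathcal I$. $\langle\mathcal A,\mathcal B\rangle=\sum a_{ijk}b_{ijk}$. The DFT $L(\mathcal A)$ has frontal slices $\sum_{j=1}^l\omega^{(k-1)(j-1)}A^{(j)}$, $\omega=e^{-2\pi\mathrm i/l}$. A compact t-SVD of $\mathcal A$ is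 a factorization $\mathcal A=\mathcal U*\mathcal S*\mathcal V^\top$ with $\mathcal U\in\mathrm{St}(n,p,l)$, $\mathcal V\in\mathbb R^{p\times p\times l}$ orthogonal and $\mathcal S\in\mathbb R^{p\times p\times l}$ f-diagonal (every frontal slice diagonal), where, by the paper's convention, the frontal slices of $L(\mathcal S)$ are diagonal with nonnegative real entries. *)

theory Defs
  imports Complex_Main
begin

text \<open>Third-order real tensors are represented as functions nat => nat => nat => real;
  indices are 0-based and only entries inside the stated dimensions are meaningful.
  Frontal slice k (0-based) is the matrix (i,j) |-> A i j k.\<close>

type_synonym tensor = "nat \<Rightarrow> nat \<Rightarrow> nat \<Rightarrow> real"

definition teq :: "nat \<Rightarrow> nat \<Rightarrow> nat \<Rightarrow> tensor \<Rightarrow> tensor \<Rightarrow> bool" where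
  "teq m q l A B \<longleftrightarrow> (\<forall>i<m. \<forall>j<q. \<forall>k<l. A i j k = B i j k)"

text \<open>t-product of A (m x p x l) and B (p x q x l): fold(bcirc(A) unfold(B)).
  The (k,t) block of bcirc(A) is the slice A^((k-t) mod l), so the k-th frontal slice of
  the product is the sum over t of A^((k-t) mod l) B^(t).\<close>
definition tprod :: "nat \<Rightarrow> nat \<Rightarrow> tensor \<Rightarrow> tensor \<Rightarrow> tensor" where
  "tprod p l A B = (\<lambda>i j k. \<Sum>t<l. \<Sum>m<p. A i m ((k + l - t) mod l) * B m j t)"

text \<open>Tensor transpose: slices (A^(1))^T, (A^(l))^T, ..., (A^(2))^T (1-based).\<close>
definition ttrans :: "nat \<Rightarrow> tensor \<Rightarrow> tensor" where
  "ttrans l A = (\<lambda>i j k. A j i ((l - k) mod l))"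

definition tid :: tensor where
  "tid = (\<lambda>i j k. if i = j \<and> k = 0 then 1 else 0)"

definition tStiefel :: "nat \<Rightarrow> nat \<Rightarrow> nat \<Rightarrow> tensor set" where
  "tStiefel n p l = {X. teq p p l (tprod n l (ttrans l X) X) tid}"

definition torthogonal :: "nat \<Rightarrow> nat \<Rightarrow> tensor \<Rightarrow> bool" where
  "torthogonal p l V \<longleftrightarrow>
     teq p p l (tprod p l (ttrans l V) V) tid \<and> teq p p l (tprod p l V (ttrans l V)) tid"

definition tinner :: "nat \<Rightarrow> nat \<Rightarrow> nat \<Rightarrow> tensor \<Rightarrow> tensor \<Rightarrow> real" where
  "tinner n p l A B = (\<Sum>i<n. \<Sum>j<p. \<Sum>k<l. A i j k * B i j k)"

definition tdft :: "nat \<Rightarrow> tensor \<Rightarrow> nat \<Rightarrow> nat \<Rightarrow> nat \<Rightarrow> complex" where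
  "tdft l A = (\<lambda>i j k. \<Sum>t<l. exp (- 2 * of_real pi * \<i> * of_nat (k * t) / of_nat l)
                                  * of_real (A i j t))"

definition fdiag :: "nat \<Rightarrow> nat \<Rightarrow> tensor \<Rightarrow> bool" where
  "fdiag p l S \<longleftrightarrow> (\<forall>i<p. \<forall>j<p. \<forall>k<l. i \<noteq> j \<longrightarrow> S i j k = 0)"

definition compact_tsvd :: "nat \<Rightarrow> nat \<Rightarrow> nat \<Rightarrow> tensor \<Rightarrow> tensor \<Rightarrow> tensor \<Rightarrow> tensor \<Rightarrow> bool" where
  "compact_tsvd n p l A U S V \<longleftrightarrow>
     U \<in> tStiefel n p l \<and> torthogonal p l V \<and> fdiag p l S \<and>
     (\<forall>i<p. \<forall>j<p. \<forall>k<l. (i \<noteq> j \<longrightarrow> tdft l S i j k = 0) \<and>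
                          Im (tdft l S i i k) = 0 \<and> Re (tdft l S i i k) \<ge> 0) \<and>
     teq n p l A (tprod p l (tprod p l U S) (ttrans l V))"

end

theory Submission
  imports Defs "HOL-Analysis.Analysis"
begin


definition ee :: "nat \<Rightarrow> int \<Rightarrow> complex" where
  "ee l a = exp (2 * of_real pi * \<i> * of_int a / of_nat l)"

lemma ee_add: "ee l (a + b) = ee l a * ee l b"
  unfolding ee_def by (simp add: exp_add[symmetric] distrib_left add_divide_distrib)

lemma ee_mult_l: "l > 0 \<Longrightarrow> ee l (int l * q) = 1"
proof -
  assume l: "l > 0"
  have "2 * of_real pi * \<i> * of_int (int l * q) / of_nat l = (2 * of_int q * of_real pi) * \<i>"
    using l by (simp add: field_simps)
  then show ?thesis unfolding ee_def using exp_integer_2pi[of "of_int q"] by simp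
qed

lemma ee_mod: "l > 0 \<Longrightarrow> ee l (a mod int l) = ee l a"
proof -
  assume l: "l > 0"
  have "a = a mod int l + int l * (a div int l)" by simp
  then have "ee l a = ee l (a mod int l) * ee l (int l * (a div int l))"
    by (metis ee_add)
  then show ?thesis using ee_mult_l[OF l] by simp
qed

lemma ee_cong: "l > 0 \<Longrightarrow> a mod int l = b mod int l \<Longrightarrow> ee l a = ee l b"
  by (metis ee_mod)

lemma ee_cnj: "cnj (ee l a) = ee l (- a)"
  unfolding ee_def by (simp add: exp_cnj)

lemma ee_pow: "ee l (int j * d) = ee l d ^ j"
proof (induct j)
  case 0 then show ?case by (simp add: ee_def)
next
  case (Suc j)
  have "ee l (int (Suc j) * d) = ee l (d + int j * d)" by (simp add: distrib_right)
  then show ?case using Suc by (simp add: ee_add)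
qed

lemma ee_eq_1: "l > 0 \<Longrightarrow> ee l d = 1 \<Longrightarrow> d mod int l = 0"
proof -
  assume l: "l > 0" and e: "ee l d = 1"
  then obtain n :: int where "Im (2 * of_real pi * \<i> * of_int d / of_nat l) = of_int (2 * n) * pi"
    unfolding ee_def exp_eq_1 by blast
  then have "2 * pi * real_of_int d / real l = 2 * real_of_int n * pi" by simp
  then have "real_of_int d = real_of_int n * real l" using l pi_gt_zero
    by (simp add: field_simps)
  then have "d = n * int l" by (metis of_int_eq_iff of_int_mult of_int_of_nat_eq)
  then show ?thesis by simp
qed

lemma ee_orth: fixes d :: int shows "l > 0 \<Longrightarrow> (\<Sum>j<l. ee l (int j * d)) = (if d mod int l = 0 then of_nat l else 0)"
proof -
  assume l: "l > 0"
  show ?thesis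
  proof (cases "d mod int l = 0")
    case True
    then have "\<And>j. ee l (int j * d) = 1"
      using ee_cong[OF l, of "int j * d" 0 for j] by (simp add: ee_def mod_mult_right_eq[symmetric] )
    then show ?thesis using True by simp
  next
    case False
    then have ne: "ee l d \<noteq> 1" using ee_eq_1[OF l] by blast
    have "ee l d ^ l = 1" using ee_pow[of l l d] ee_mult_l[OF l, of d] by simp
    then show ?thesis using False ne by (simp add: ee_pow sum_gp_strict)
  qed
qed

definition shat :: "nat \<Rightarrow> (nat \<Rightarrow> real) \<Rightarrow> nat \<Rightarrow> complex" where
  "shat l s j = (\<Sum>t<l. ee l (- (int j * int t)) * of_real (s t))"

lemma ee_prod2: "ee l (- (int j * int t)) * ee l (int j * int d) = ee l (int j * (int d - int t))"
  by (simp add: ee_add[symmetric] algebra_simps)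

lemma inv_dft:
  assumes l: "l > 0" and d: "d < l"
  shows "of_real (s d) = (\<Sum>j<l. shat l s j * ee l (int j * int d)) / of_nat l"
proof -
  have "(\<Sum>j<l. shat l s j * ee l (int j * int d))
      = (\<Sum>j<l. \<Sum>t<l. of_real (s t) * ee l (int j * (int d - int t)))"
    unfolding shat_def sum_distrib_right
    by (intro sum.cong refl) (simp add: ee_prod2[symmetric] mult_ac)
  also have "\<dots> = (\<Sum>t<l. of_real (s t) * (\<Sum>j<l. ee l (int j * (int d - int t))))"
    by (subst sum.swap) (simp add: sum_distrib_left)
  also have "\<dots> = (\<Sum>t<l. of_real (s t) * (if t = d then of_nat l else 0))"
  proof (intro sum.cong refl)
    fix t assume t: "t \<in> {..<l}"
    have "((int d - int t) mod int l = 0) = (t = d)"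
    proof
      assume "(int d - int t) mod int l = 0"
      then have "int l dvd (int d - int t)" by auto
      then obtain q where q: "int d - int t = int l * q" by (auto elim: dvdE)
      have "q = 0"
      proof (rule ccontr)
        assume "q \<noteq> 0"
        then have "\<bar>q\<bar> \<ge> 1" by linarith
        then have "int l * 1 \<le> int l * \<bar>q\<bar>" by (intro mult_left_mono) auto
        then have "\<bar>int l * q\<bar> \<ge> int l" by (simp add: abs_mult)
        then show False using q t d by auto
      qed
      then show "t = d" using q by simp
    qed simp
    then show "of_real (s t) * (\<Sum>j<l. ee l (int j * (int d - int t))) =
               of_real (s t) * (if t = d then of_nat l else 0)"
      by (simp add: ee_orth[OF l])
  qed
  also have "\<dots> = of_real (s d) * of_nat l" using d by (simp add: if_distrib cong: if_cong)
  finally show ?thesis using l by simp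
qed

lemma idx1: assumes l: "l > 0" and t: "t < l"
  shows "int j * int ((k + l - t) mod l) mod int l = (int j * int k + - (int j * int t)) mod int l"
proof -
  have "int ((k + l - t) mod l) = (int k + int l - int t) mod int l"
    using t by (simp add: of_nat_mod of_nat_diff)
  then have "int j * int ((k + l - t) mod l) mod int l = int j * (int k + int l - int t) mod int l"
    by (simp add: mod_mult_right_eq)
  also have "\<dots> = (int j * int k + - (int j * int t) + int j * int l) mod int l"
    by (simp add: algebra_simps)
  also have "\<dots> = (int j * int k + - (int j * int t)) mod int l" by simp
  finally show ?thesis .
qed

lemma shat_real: "Im z = 0 \<Longrightarrow> z = of_real (Re z)"
  by (simp add: complex_eq_iff)

lemma psd_core:
  assumes l: "l > 0" and h: "\<forall>j<l. Im (shat l s j) = 0 \<and> Re (shat l s j) \<ge> 0"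
  shows "0 \<le> (\<Sum>k<l. (\<Sum>t<l. s ((k + l - t) mod l) * x t) * x k)"
proof -
  define r where "r j = Re (shat l s j)" for j
  define Y where "Y j = (\<Sum>k<l. of_real (x k) * ee l (int j * int k))" for j
  have sh: "shat l s j = of_real (r j)" if "j < l" for j
    using h that shat_real unfolding r_def by blast
  have cY: "cnj (Y j) = (\<Sum>t<l. of_real (x t) * ee l (- (int j * int t)))" for j
    unfolding Y_def by (simp add: ee_cnj)
  have "complex_of_real (\<Sum>k<l. (\<Sum>t<l. s ((k + l - t) mod l) * x t) * x k)
     = (\<Sum>k<l. \<Sum>t<l. of_real (s ((k + l - t) mod l)) * of_real (x t) * of_real (x k))"
    by (simp add: sum_distrib_right)
  also have "\<dots> = (\<Sum>k<l. \<Sum>t<l. (\<Sum>j<l. of_real (r j) * ee l (int j * int k) * ee l (- (int j * int t))) / of_nat l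
                     * of_real (x t) * of_real (x k))"
  proof (intro sum.cong refl)
    fix k t assume k: "k \<in> {..<l}" and t: "t \<in> {..<l}"
    have "of_real (s ((k + l - t) mod l)) = (\<Sum>j<l. shat l s j * ee l (int j * int ((k + l - t) mod l))) / of_nat l"
      using inv_dft[OF l, of "(k + l - t) mod l" s] l by simp
    also have "\<dots> = (\<Sum>j<l. of_real (r j) * ee l (int j * int k) * ee l (- (int j * int t))) / of_nat l"
    proof -
      have "ee l (int j * int ((k + l - t) mod l)) = ee l (int j * int k) * ee l (- (int j * int t))" for j
        using ee_cong[OF l idx1[OF l, of t j k]] t ee_add[of l "int j * int k" "- (int j * int t)"] by simp
      then show ?thesis using sh by (simp add: mult.assoc)
    qed
    finally show "of_real (s ((k + l - t) mod l)) * of_real (x t) * of_real (x k) =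
      (\<Sum>j<l. of_real (r j) * ee l (int j * int k) * ee l (- (int j * int t))) / of_nat l
                     * of_real (x t) * of_real (x k)" by simp
  qed
  also have "\<dots> = (\<Sum>k<l. \<Sum>t<l. \<Sum>j<l. of_real (r j) * (of_real (x k) * ee l (int j * int k)) * (of_real (x t) * ee l (- (int j * int t))) / of_nat l)"
    by (simp add: sum_divide_distrib sum_distrib_right sum_distrib_left mult_ac)
  also have "\<dots> = (\<Sum>j<l. \<Sum>k<l. \<Sum>t<l. of_real (r j) * (of_real (x k) * ee l (int j * int k)) * (of_real (x t) * ee l (- (int j * int t))) / of_nat l)"
    by (subst sum.swap, rule sum.cong, simp, subst sum.swap, simp)
  also have "\<dots> = (\<Sum>j<l. of_real (r j) * Y j * cnj (Y j)) / of_nat l"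
    unfolding cY unfolding Y_def
    apply (simp add: sum_divide_distrib sum_distrib_left sum_distrib_right mult.assoc)
    apply (rule sum.cong[OF refl])
    apply (rule sum.swap)
    done
  also have "\<dots> = of_real ((\<Sum>j<l. r j * (cmod (Y j))\<^sup>2) / real l)"
    by (simp add: complex_norm_square[symmetric] mult.assoc)
  finally have eq: "(\<Sum>k<l. (\<Sum>t<l. s ((k + l - t) mod l) * x t) * x k) = (\<Sum>j<l. r j * (cmod (Y j))\<^sup>2) / real l"
    using of_real_eq_iff by blast
  have "\<forall>j\<in>{..<l}. r j \<ge> 0" using h unfolding r_def by auto
  then have "0 \<le> (\<Sum>j<l. r j * (cmod (Y j))\<^sup>2)" by (intro sum_nonneg) auto
  then show ?thesis unfolding eq by simp
qed

lemma sym_core: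
  assumes l: "l > 0" and h: "\<forall>j<l. Im (shat l s j) = 0 \<and> Re (shat l s j) \<ge> 0" and k: "k < l"
  shows "s ((l - k) mod l) = s k"
proof -
  define r where "r j = Re (shat l s j)" for j
  have sh: "shat l s j = of_real (r j)" if "j < l" for j
    using h that shat_real unfolding r_def by blast
  have i2: "int j * int ((l - k) mod l) mod int l = (- (int j * int k)) mod int l" for j
  proof -
    have "int ((l - k) mod l) = (- int k) mod int l"
      using k by (simp add: of_nat_mod of_nat_diff)
    then show ?thesis by (metis mod_mult_right_eq mult_minus_right)
  qed
  have "complex_of_real (s ((l - k) mod l)) = (\<Sum>j<l. shat l s j * ee l (int j * int ((l - k) mod l))) / of_nat l"
    using inv_dft[OF l, of "(l - k) mod l" s] l by simp
  also have "\<dots> = (\<Sum>j<l. of_real (r j) * ee l (- (int j * int k))) / of_nat l"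
    using sh ee_cong[OF l i2] by simp
  also have "\<dots> = cnj ((\<Sum>j<l. shat l s j * ee l (int j * int k)) / of_nat l)"
    using sh by (simp add: ee_cnj)
  also have "\<dots> = cnj (complex_of_real (s k))"
    using inv_dft[OF l k, of s] by simp
  also have "\<dots> = complex_of_real (s k)" by simp
  finally show ?thesis using of_real_eq_iff by blast
qed

lemma tdft_shat: "tdft l S i j k = shat l (\<lambda>t. S i j t) k"
  unfolding tdft_def shat_def ee_def
  by (intro sum.cong refl arg_cong2[where f="(*)"] refl arg_cong[where f=exp]) simp



lemma int_add_diff: "(y::nat) \<le> l \<Longrightarrow> int (x + l - y) = int x + int l - int y"
  by simp

lemma int_add_diff': "(y::nat) \<le> l \<Longrightarrow> int (x + (l - y)) = int x + int l - int y"
  by simp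

lemma negneg: "(k::nat) < l \<Longrightarrow> (l - (l - k) mod l) mod l = k"
  by (cases "k = 0") auto

lemma zmod_left_diff: "((x::int) mod m + y - z) mod m = (x + y - z) mod m"
  by (metis add_diff_eq mod_add_left_eq)

lemma sum_shift:
  assumes l: "(l::nat) > 0"
  shows "(\<Sum>k<l. f ((k + a) mod l)) = (\<Sum>k<l. f k)"
proof (rule sum.reindex_bij_witness[of _ "\<lambda>k. (k + (l - a mod l)) mod l" "\<lambda>k. (k + a) mod l"])
  fix k assume k: "k \<in> {..<l}"
  have le: "a mod l \<le> l" using l by (simp add: order.strict_implies_order)
  show "((k + a) mod l + (l - a mod l)) mod l = k"
  proof -
    have "int (((k + a) mod l + (l - a mod l)) mod l) = int k"
      using k l le by (simp add: of_nat_mod int_add_diff mod_simps zmod_left_diff diff_add_eq)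
    then show ?thesis by simp
  qed
  show "((k + (l - a mod l)) mod l + a) mod l = k"
  proof -
    have "int (((k + (l - a mod l)) mod l + a) mod l) = int k"
      using k l le by (simp add: of_nat_mod int_add_diff mod_simps zmod_left_diff diff_add_eq)
    then show ?thesis by simp
  qed
qed (use l in auto)

lemma sum_neg:
  assumes l: "(l::nat) > 0"
  shows "(\<Sum>k<l. f ((l - k) mod l)) = (\<Sum>k<l. f k)"
proof (rule sum.reindex_bij_witness[of _ "\<lambda>k. (l - k) mod l" "\<lambda>k. (l - k) mod l"])
qed (use l negneg in auto)

lemmas idxs = of_nat_mod int_add_diff mod_simps zmod_left_diff diff_add_eq

lemma teq_refl: "teq m q l A A" by (simp add: teq_def)
lemma teq_sym: "teq m q l A B \<Longrightarrow> teq m q l B A" by (simp add: teq_def)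
lemma teq_trans: "teq m q l A B \<Longrightarrow> teq m q l B C \<Longrightarrow> teq m q l A C" by (simp add: teq_def)

lemma tprod_cong: "teq m p l A A' \<Longrightarrow> teq p q l B B' \<Longrightarrow> teq m q l (tprod p l A B) (tprod p l A' B')"
  unfolding teq_def tprod_def by (intro allI impI sum.cong refl) auto

lemma ttrans_cong: assumes h: "teq m q l A A'" shows "teq q m l (ttrans l A) (ttrans l A')"
  unfolding teq_def ttrans_def
proof (intro allI impI)
  fix i j k assume "i < q" "j < m" "k < l"
  moreover have "(l - k) mod l < l" using \<open>k < l\<close> by simp
  ultimately show "A j i ((l - k) mod l) = A' j i ((l - k) mod l)" using h unfolding teq_def by blast
qed

lemma ttrans_ttrans: "teq m q l (ttrans l (ttrans l A)) A"
  unfolding teq_def ttrans_def by (simp add: negneg)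

lemma idx0: "(t::nat) < l \<Longrightarrow> k < l \<Longrightarrow> ((k + l - t) mod l = 0) = (t = k)"
proof -
  assume tl: "t < l" and kl: "k < l"
  show ?thesis
  proof (cases "t \<le> k")
    case True
    then have e: "k + l - t = (k - t) + l" by simp
    have "(k - t + l) mod l = (k - t) mod l" by (rule mod_add_self2)
    also have "\<dots> = k - t" using kl by (intro mod_less) linarith
    finally have "(k + l - t) mod l = k - t" unfolding e .
    then show ?thesis using True by linarith
  next
    case False
    then have a: "k + l - t < l" "k + l - t > 0" using tl kl by linarith+
    then have "(k + l - t) mod l = k + l - t" by (intro mod_less)
    then show ?thesis using False a by linarith
  qed
qed

lemma if01_mult: "(if c then 1 else 0) * (x::real) = (if c then x else 0)" by simp
lemma mult_if01: "(x::real) * (if c then 1 else 0) = (if c then x else 0)" by simp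

lemma tid_left: "teq m q l (tprod m l tid B) B"
proof -
  have "(\<Sum>t<l. \<Sum>r<m. (if i = r \<and> (k + l - t) mod l = 0 then 1 else 0) * B r j t) = B i j k"
    if "i < m" "k < l" for i j k
  proof -
    have "(\<Sum>t<l. \<Sum>r<m. (if i = r \<and> (k + l - t) mod l = 0 then 1 else 0) * B r j t)
        = (\<Sum>t<l. if t = k then B i j t else 0)"
    proof (intro sum.cong refl)
      fix t assume t: "t \<in> {..<l}"
      have c: "((k + l - t) mod l = 0) = (t = k)" using idx0 t that by auto
      show "(\<Sum>r<m. (if i = r \<and> (k + l - t) mod l = 0 then 1 else 0) * B r j t) = (if t = k then B i j t else 0)"
        unfolding c using that by (cases "t = k") (simp_all add: if01_mult)
    qed
    also have "\<dots> = B i j k" using that by simp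
    finally show ?thesis .
  qed
  then show ?thesis unfolding teq_def tprod_def tid_def by auto
qed

lemma tid_right: "teq m q l (tprod q l A tid) A"
proof -
  have "(\<Sum>t<l. \<Sum>r<q. A i r ((k + l - t) mod l) * (if r = j \<and> t = 0 then 1 else 0)) = A i j k"
    if "j < q" "k < l" for i j k
  proof -
    have "(\<Sum>t<l. \<Sum>r<q. A i r ((k + l - t) mod l) * (if r = j \<and> t = 0 then 1 else 0))
        = (\<Sum>t<l. if t = 0 then A i j ((k + l - t) mod l) else 0)"
    proof (intro sum.cong refl)
      fix t assume t: "t \<in> {..<l}"
      show "(\<Sum>r<q. A i r ((k + l - t) mod l) * (if r = j \<and> t = 0 then 1 else 0)) = (if t = 0 then A i j ((k + l - t) mod l) else 0)"
        using that by (cases "t = 0") (simp_all add: mult_if01)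
    qed
    also have "\<dots> = A i j k" using that by simp
    finally show ?thesis .
  qed
  then show ?thesis unfolding teq_def tprod_def tid_def by auto
qed

lemma sum4_perm:
  "(\<Sum>u\<in>U. \<Sum>r\<in>R. \<Sum>t\<in>T. \<Sum>m\<in>M. f u r t m) = (\<Sum>t\<in>T. \<Sum>u\<in>U. \<Sum>m\<in>M. \<Sum>r\<in>R. f u r t m)"
proof -
  have "(\<Sum>u\<in>U. \<Sum>r\<in>R. \<Sum>t\<in>T. \<Sum>m\<in>M. f u r t m) = (\<Sum>u\<in>U. \<Sum>t\<in>T. \<Sum>r\<in>R. \<Sum>m\<in>M. f u r t m)"
    by (rule sum.cong[OF refl], rule sum.swap)
  also have "\<dots> = (\<Sum>u\<in>U. \<Sum>t\<in>T. \<Sum>m\<in>M. \<Sum>r\<in>R. f u r t m)"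
    by (rule sum.cong[OF refl], rule sum.cong[OF refl], rule sum.swap)
  also have "\<dots> = (\<Sum>t\<in>T. \<Sum>u\<in>U. \<Sum>m\<in>M. \<Sum>r\<in>R. f u r t m)"
    by (rule sum.swap)
  finally show ?thesis .
qed

lemma I1: "(l::nat) > 0 \<Longrightarrow> u < l \<Longrightarrow> t < l \<Longrightarrow> ((u + t) mod l + l - t) mod l = u"
proof -
  assume l: "l > 0" and "u < l" "t < l"
  then have "int (((u + t) mod l + l - t) mod l) = int u"
    by (simp add: idxs)
  then show ?thesis by simp
qed

lemma I2: "(l::nat) > 0 \<Longrightarrow> u < l \<Longrightarrow> t < l \<Longrightarrow> k < l \<Longrightarrow>
   (k + l - (u + t) mod l) mod l = ((k + l - t) mod l + l - u) mod l"
proof -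
  assume l: "l > 0" and "u < l" "t < l" "k < l"
  then have "int ((k + l - (u + t) mod l) mod l) = int (((k + l - t) mod l + l - u) mod l)"
    by (simp add: idxs mod_le_divisor mod_eq_dvd_iff)
  then show ?thesis by simp
qed

lemma tprod_assoc_pt:
  assumes k: "k < l"
  shows "tprod q l (tprod p l A B) C i j k = tprod p l A (tprod q l B C) i j k"
proof -
  have l: "l > 0" using k by simp
  define G where "G t u m r = A i r (((k + l - t) mod l + l - u) mod l) * B r m u * C m j t" for t u m r
  have "tprod q l (tprod p l A B) C i j k = (\<Sum>t<l. \<Sum>m<q. \<Sum>u<l. \<Sum>r<p. G t u m r)"
    unfolding tprod_def G_def by (simp add: sum_distrib_right)
  also have "\<dots> = (\<Sum>t<l. \<Sum>u<l. \<Sum>m<q. \<Sum>r<p. G t u m r)"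
    by (rule sum.cong[OF refl], rule sum.swap)
  finally have L: "tprod q l (tprod p l A B) C i j k = (\<Sum>t<l. \<Sum>u<l. \<Sum>m<q. \<Sum>r<p. G t u m r)" .
  define F where "F t u = (\<Sum>m<q. \<Sum>r<p. A i r ((k + l - u) mod l) * B r m ((u + l - t) mod l) * C m j t)" for t u
  have "tprod p l A (tprod q l B C) i j k = (\<Sum>u<l. \<Sum>r<p. \<Sum>t<l. \<Sum>m<q. A i r ((k + l - u) mod l) * B r m ((u + l - t) mod l) * C m j t)"
    unfolding tprod_def by (simp add: sum_distrib_left mult.assoc)
  also have "\<dots> = (\<Sum>t<l. \<Sum>u<l. F t u)" unfolding F_def by (rule sum4_perm)
  also have "\<dots> = (\<Sum>t<l. \<Sum>u<l. F t ((u + t) mod l))"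
    by (rule sum.cong[OF refl], rule sum_shift[OF l, symmetric])
  also have "\<dots> = (\<Sum>t<l. \<Sum>u<l. \<Sum>m<q. \<Sum>r<p. G t u m r)"
  proof (intro sum.cong refl)
    fix t u assume "t \<in> {..<l}" "u \<in> {..<l}"
    then show "F t ((u + t) mod l) = (\<Sum>m<q. \<Sum>r<p. G t u m r)"
      unfolding F_def G_def using I1[OF l, of u t] I2[OF l, of u t k] k by simp
  qed
  finally show ?thesis using L by simp
qed

lemma tprod_assoc: "teq m r l (tprod q l (tprod p l A B) C) (tprod p l A (tprod q l B C))"
  unfolding teq_def using tprod_assoc_pt by blast

lemma J1: "(l::nat) > 0 \<Longrightarrow> t < l \<Longrightarrow> k < l \<Longrightarrow> (l - (k + l - (t + k) mod l) mod l) mod l = t"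
proof -
  assume l: "l > 0" and "t < l" "k < l"
  then have "int ((l - (k + l - (t + k) mod l) mod l) mod l) = int t"
    by (simp add: idxs of_nat_diff mod_le_divisor mod_eq_dvd_iff)
  then show ?thesis by simp
qed

lemma J2: "(l::nat) > 0 \<Longrightarrow> t < l \<Longrightarrow> k < l \<Longrightarrow> (l - (t + k) mod l) mod l = ((l - k) mod l + l - t) mod l"
proof -
  assume l: "l > 0" and "t < l" "k < l"
  then have "int ((l - (t + k) mod l) mod l) = int (((l - k) mod l + l - t) mod l)"
    by (simp add: idxs of_nat_diff mod_le_divisor mod_eq_dvd_iff)
  then show ?thesis by simp
qed

lemma J3: "(l::nat) > 0 \<Longrightarrow> t < l \<Longrightarrow> k < l \<Longrightarrow> (l - (t + l - k) mod l) mod l = (k + l - t) mod l"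
proof -
  assume l: "l > 0" and "t < l" "k < l"
  then have "int ((l - (t + l - k) mod l) mod l) = int ((k + l - t) mod l)"
    by (simp add: idxs of_nat_diff mod_le_divisor mod_eq_dvd_iff)
  then show ?thesis by simp
qed

lemma K1: "(l::nat) > 0 \<Longrightarrow> t < l \<Longrightarrow> (k + l - (l - t) mod l) mod l = (k + t) mod l"
proof -
  assume l: "l > 0" and "t < l"
  then have "int ((k + l - (l - t) mod l) mod l) = int ((k + t) mod l)"
    by (simp add: idxs of_nat_diff mod_le_divisor mod_eq_dvd_iff)
  then show ?thesis by simp
qed

lemma K2: "(l::nat) > 0 \<Longrightarrow> t < l \<Longrightarrow> k < l \<Longrightarrow> ((k + (l - t)) mod l + t) mod l = k"
proof -
  assume l: "l > 0" and "t < l" "k < l"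
  then have "int (((k + (l - t)) mod l + t) mod l) = int k"
    by (simp add: idxs of_nat_diff mod_le_divisor mod_eq_dvd_iff)
  then show ?thesis by simp
qed

lemma ttrans_tprod_pt:
  assumes k: "k < l"
  shows "ttrans l (tprod p l A B) i j k = tprod p l (ttrans l B) (ttrans l A) i j k"
proof -
  have l: "l > 0" using k by simp
  define F where "F t = (\<Sum>r<p. B r i ((l - (k + l - t) mod l) mod l) * A j r ((l - t) mod l))" for t
  have "tprod p l (ttrans l B) (ttrans l A) i j k = (\<Sum>t<l. F t)"
    unfolding tprod_def ttrans_def F_def by simp
  also have "\<dots> = (\<Sum>t<l. F ((t + k) mod l))" by (rule sum_shift[OF l, symmetric])
  also have "\<dots> = (\<Sum>t<l. \<Sum>r<p. A j r (((l - k) mod l + l - t) mod l) * B r i t)"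
    unfolding F_def using J1[OF l _ k] J2[OF l _ k] by (intro sum.cong refl) (simp add: mult.commute)
  also have "\<dots> = ttrans l (tprod p l A B) i j k"
    unfolding tprod_def ttrans_def by simp
  finally show ?thesis by simp
qed

lemma ttrans_tprod: "teq q m l (ttrans l (tprod p l A B)) (tprod p l (ttrans l B) (ttrans l A))"
  unfolding teq_def using ttrans_tprod_pt by blast

lemma perm5:
  "(\<Sum>i\<in>I. \<Sum>j\<in>J. \<Sum>k\<in>K. \<Sum>t\<in>T. \<Sum>r\<in>R. f i j k t r)
 = (\<Sum>r\<in>R. \<Sum>j\<in>J. \<Sum>t\<in>T. \<Sum>k\<in>K. \<Sum>i\<in>I. f i j k t r)"
proof -
  have "(\<Sum>i\<in>I. \<Sum>j\<in>J. \<Sum>k\<in>K. \<Sum>t\<in>T. \<Sum>r\<in>R. f i j k t r)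
      = (\<Sum>i\<in>I. \<Sum>j\<in>J. \<Sum>k\<in>K. \<Sum>r\<in>R. \<Sum>t\<in>T. f i j k t r)"
    by (rule sum.cong[OF refl], rule sum.cong[OF refl], rule sum.cong[OF refl], rule sum.swap)
  also have "\<dots> = (\<Sum>i\<in>I. \<Sum>j\<in>J. \<Sum>r\<in>R. \<Sum>k\<in>K. \<Sum>t\<in>T. f i j k t r)"
    by (rule sum.cong[OF refl], rule sum.cong[OF refl], rule sum.swap)
  also have "\<dots> = (\<Sum>i\<in>I. \<Sum>r\<in>R. \<Sum>j\<in>J. \<Sum>k\<in>K. \<Sum>t\<in>T. f i j k t r)"
    by (rule sum.cong[OF refl], rule sum.swap)
  also have "\<dots> = (\<Sum>r\<in>R. \<Sum>i\<in>I. \<Sum>j\<in>J. \<Sum>k\<in>K. \<Sum>t\<in>T. f i j k t r)"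
    by (rule sum.swap)
  also have "\<dots> = (\<Sum>r\<in>R. \<Sum>j\<in>J. \<Sum>i\<in>I. \<Sum>k\<in>K. \<Sum>t\<in>T. f i j k t r)"
    by (rule sum.cong[OF refl], rule sum.swap)
  also have "\<dots> = (\<Sum>r\<in>R. \<Sum>j\<in>J. \<Sum>k\<in>K. \<Sum>i\<in>I. \<Sum>t\<in>T. f i j k t r)"
    by (rule sum.cong[OF refl], rule sum.cong[OF refl], rule sum.swap)
  also have "\<dots> = (\<Sum>r\<in>R. \<Sum>j\<in>J. \<Sum>k\<in>K. \<Sum>t\<in>T. \<Sum>i\<in>I. f i j k t r)"
    by (rule sum.cong[OF refl], rule sum.cong[OF refl], rule sum.cong[OF refl], rule sum.swap)
  also have "\<dots> = (\<Sum>r\<in>R. \<Sum>j\<in>J. \<Sum>t\<in>T. \<Sum>k\<in>K. \<Sum>i\<in>I. f i j k t r)"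
    by (rule sum.cong[OF refl], rule sum.cong[OF refl], rule sum.swap)
  finally show ?thesis .
qed

lemma adj2: "tinner m q l (tprod p l A B) C = tinner p q l B (tprod m l (ttrans l A) C)"
proof (cases "l = 0")
  case True then show ?thesis by (simp add: tinner_def)
next
  case False
  then have l: "l > 0" by simp
  define H where "H i j k t r = A i r ((k + l - t) mod l) * B r j t * C i j k" for i j k t r
  have "tinner m q l (tprod p l A B) C = (\<Sum>i<m. \<Sum>j<q. \<Sum>k<l. \<Sum>t<l. \<Sum>r<p. H i j k t r)"
    unfolding tinner_def tprod_def H_def by (simp add: sum_distrib_right)
  also have "\<dots> = (\<Sum>r<p. \<Sum>j<q. \<Sum>t<l. \<Sum>k<l. \<Sum>i<m. H i j k t r)" by (rule perm5)
  also have "\<dots> = tinner p q l B (tprod m l (ttrans l A) C)"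
    unfolding tinner_def tprod_def ttrans_def H_def
    by (simp add: sum_distrib_left J3[OF l] mult_ac)
  finally show ?thesis .
qed

lemma perm4b:
  "(\<Sum>j\<in>J. \<Sum>k\<in>K. \<Sum>t\<in>T. \<Sum>r\<in>R. f j k t r)
 = (\<Sum>r\<in>R. \<Sum>j\<in>J. \<Sum>t\<in>T. \<Sum>k\<in>K. f j k t r)"
proof -
  have "(\<Sum>j\<in>J. \<Sum>k\<in>K. \<Sum>t\<in>T. \<Sum>r\<in>R. f j k t r)
      = (\<Sum>j\<in>J. \<Sum>k\<in>K. \<Sum>r\<in>R. \<Sum>t\<in>T. f j k t r)"
    by (rule sum.cong[OF refl], rule sum.cong[OF refl], rule sum.swap)
  also have "\<dots> = (\<Sum>j\<in>J. \<Sum>r\<in>R. \<Sum>k\<in>K. \<Sum>t\<in>T. f j k t r)"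
    by (rule sum.cong[OF refl], rule sum.swap)
  also have "\<dots> = (\<Sum>r\<in>R. \<Sum>j\<in>J. \<Sum>k\<in>K. \<Sum>t\<in>T. f j k t r)"
    by (rule sum.swap)
  also have "\<dots> = (\<Sum>r\<in>R. \<Sum>j\<in>J. \<Sum>t\<in>T. \<Sum>k\<in>K. f j k t r)"
    by (rule sum.cong[OF refl], rule sum.cong[OF refl], rule sum.swap)
  finally show ?thesis .
qed

lemma perm3:
  "(\<Sum>k\<in>K. \<Sum>t\<in>T. \<Sum>j\<in>J. f k t j) = (\<Sum>j\<in>J. \<Sum>k\<in>K. \<Sum>t\<in>T. f k t j)"
proof -
  have "(\<Sum>k\<in>K. \<Sum>t\<in>T. \<Sum>j\<in>J. f k t j) = (\<Sum>k\<in>K. \<Sum>j\<in>J. \<Sum>t\<in>T. f k t j)"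
    by (rule sum.cong[OF refl], rule sum.swap)
  also have "\<dots> = (\<Sum>j\<in>J. \<Sum>k\<in>K. \<Sum>t\<in>T. f k t j)" by (rule sum.swap)
  finally show ?thesis .
qed

lemma adj1: "tinner m q l (tprod p l A B) C = tinner m p l A (tprod q l C (ttrans l B))"
proof (cases "l = 0")
  case True then show ?thesis by (simp add: tinner_def)
next
  case False
  then have l: "l > 0" by simp
  define H where "H i j k t r = A i r ((k + l - t) mod l) * B r j t * C i j k" for i j k t r
  define R where "R i r k t j = A i r k * (C i j ((k + l - t) mod l) * B r j ((l - t) mod l))" for i r k t j
  have "tinner m q l (tprod p l A B) C = (\<Sum>i<m. \<Sum>j<q. \<Sum>k<l. \<Sum>t<l. \<Sum>r<p. H i j k t r)"
    unfolding tinner_def tprod_def H_def by (simp add: sum_distrib_right)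
  also have "\<dots> = (\<Sum>i<m. \<Sum>r<p. \<Sum>j<q. \<Sum>t<l. \<Sum>k<l. H i j k t r)"
    by (rule sum.cong[OF refl], rule perm4b)
  also have "\<dots> = (\<Sum>i<m. \<Sum>r<p. \<Sum>j<q. \<Sum>k<l. \<Sum>t<l. R i r k t j)"
  proof (rule sum.cong[OF refl], rule sum.cong[OF refl], rule sum.cong[OF refl])
    fix i r j assume "i \<in> {..<m}" "r \<in> {..<p}" "j \<in> {..<q}"
    have "(\<Sum>k<l. \<Sum>t<l. R i r k t j) = (\<Sum>k<l. \<Sum>t<l. R i r k ((l - t) mod l) j)"
      by (rule sum.cong[OF refl], rule sum_neg[OF l, symmetric])
    also have "\<dots> = (\<Sum>k<l. \<Sum>t<l. A i r k * C i j ((k + t) mod l) * B r j t)"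
      unfolding R_def using K1[OF l] negneg by (intro sum.cong refl) (simp add: mult.assoc)
    also have "\<dots> = (\<Sum>t<l. \<Sum>k<l. A i r k * C i j ((k + t) mod l) * B r j t)"
      by (rule sum.swap)
    also have "\<dots> = (\<Sum>t<l. \<Sum>k<l. A i r ((k + (l - t)) mod l) * C i j (((k + (l - t)) mod l + t) mod l) * B r j t)"
      by (rule sum.cong[OF refl], rule sum_shift[OF l, symmetric])
    also have "\<dots> = (\<Sum>t<l. \<Sum>k<l. H i j k t r)"
      unfolding H_def using K2[OF l] by (intro sum.cong refl) (simp add: mult_ac)
    finally show "(\<Sum>t<l. \<Sum>k<l. H i j k t r) = (\<Sum>k<l. \<Sum>t<l. R i r k t j)" by simp
  qed
  also have "\<dots> = (\<Sum>i<m. \<Sum>r<p. \<Sum>k<l. \<Sum>t<l. \<Sum>j<q. R i r k t j)"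
    by (rule sum.cong[OF refl], rule sum.cong[OF refl], rule perm3[symmetric])
  also have "\<dots> = tinner m p l A (tprod q l C (ttrans l B))"
    unfolding tinner_def tprod_def ttrans_def R_def
    by (simp add: sum_distrib_left)
  finally show ?thesis .
qed

lemma tinner_cong: "teq m q l A A' \<Longrightarrow> teq m q l B B' \<Longrightarrow> tinner m q l A B = tinner m q l A' B'"
  unfolding teq_def tinner_def by (intro sum.cong refl) auto

lemma tinner_comm: "tinner m q l A B = tinner m q l B A"
  unfolding tinner_def by (simp add: mult.commute)

definition tsub :: "tensor \<Rightarrow> tensor \<Rightarrow> tensor" where
  "tsub X Y = (\<lambda>i j k. X i j k - Y i j k)"

lemma tprod_sub_right: "tprod p l A (tsub X Y) = tsub (tprod p l A X) (tprod p l A Y)"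
  unfolding tprod_def tsub_def by (simp add: algebra_simps sum_subtractf)

lemma tinner_sub_left: "tinner m q l (tsub X Y) C = tinner m q l X C - tinner m q l Y C"
  unfolding tinner_def tsub_def by (simp add: algebra_simps sum_subtractf)

lemma tinner_sub_right: "tinner m q l C (tsub X Y) = tinner m q l C X - tinner m q l C Y"
  unfolding tinner_def tsub_def by (simp add: algebra_simps sum_subtractf)



lemma fdiag_inner:
  assumes fd: "fdiag p l S" and i: "i < p" and k: "k < l" and t: "t < l"
  shows "(\<Sum>m<p. S i m ((k + l - t) mod l) * M m j t) = S i i ((k + l - t) mod l) * M i j t"
proof -
  have "(\<Sum>m<p. S i m ((k + l - t) mod l) * M m j t) = (\<Sum>m<p. if m = i then S i i ((k + l - t) mod l) * M i j t else 0)"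
  proof (rule sum.cong[OF refl])
    fix m assume m: "m \<in> {..<p}"
    have "(k + l - t) mod l < l" using k by simp
    then show "S i m ((k + l - t) mod l) * M m j t = (if m = i then S i i ((k + l - t) mod l) * M i j t else 0)"
      using fd i m unfolding fdiag_def by auto
  qed
  also have "\<dots> = S i i ((k + l - t) mod l) * M i j t" using i by simp
  finally show ?thesis .
qed

lemma tpsd:
  assumes fd: "fdiag p l S"
    and dft: "\<forall>i<p. \<forall>k<l. Im (tdft l S i i k) = 0 \<and> Re (tdft l S i i k) \<ge> 0"
  shows "0 \<le> tinner p r l (tprod p l S M) M"
proof (cases "l = 0")
  case True then show ?thesis by (simp add: tinner_def)
next
  case False
  then have l: "l > 0" by simp
  have "tinner p r l (tprod p l S M) M =
     (\<Sum>i<p. \<Sum>j<r. \<Sum>k<l. (\<Sum>t<l. S i i ((k + l - t) mod l) * M i j t) * M i j k)"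
    unfolding tinner_def tprod_def
    by (intro sum.cong refl arg_cong2[where f="(*)"]) (simp add: fdiag_inner[OF fd])
  also have "\<dots> \<ge> 0"
  proof (rule sum_nonneg, rule sum_nonneg)
    fix i j assume i: "i \<in> {..<p}" and j: "j \<in> {..<r}"
    have h: "\<forall>k<l. Im (shat l (\<lambda>t. S i i t) k) = 0 \<and> Re (shat l (\<lambda>t. S i i t) k) \<ge> 0"
      using dft i by (simp add: tdft_shat[symmetric])
    show "0 \<le> (\<Sum>k<l. (\<Sum>t<l. S i i ((k + l - t) mod l) * M i j t) * M i j k)"
      using psd_core[OF l h, of "\<lambda>t. M i j t"] by simp
  qed
  finally show ?thesis .
qed

lemma tsym:
  assumes fd: "fdiag p l S"
    and dft: "\<forall>i<p. \<forall>k<l. Im (tdft l S i i k) = 0 \<and> Re (tdft l S i i k) \<ge> 0"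
  shows "teq p p l (ttrans l S) S"
  unfolding teq_def ttrans_def
proof (intro allI impI)
  fix i j k assume i: "i < p" and j: "j < p" and k: "k < l"
  then have l: "l > 0" by simp
  show "S j i ((l - k) mod l) = S i j k"
  proof (cases "i = j")
    case True
    have h: "\<forall>k<l. Im (shat l (\<lambda>t. S i i t) k) = 0 \<and> Re (shat l (\<lambda>t. S i i t) k) \<ge> 0"
      using dft i by (simp add: tdft_shat[symmetric])
    show ?thesis using sym_core[OF l h k] True by simp
  next
    case False
    have "(l - k) mod l < l" using l by simp
    then show ?thesis using fd False i j k unfolding fdiag_def by auto
  qed
qed

declare teq_trans[trans]

theorem mainTheorem17:
  fixes n p l :: nat and A U S V :: tensor
  assumes "n \<ge> p"
    and "compact_tsvd n p l A U S V"
  shows "tprod p l U (ttrans l V) \<in> tStiefel n p l \<and>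
         (\<forall>Q \<in> tStiefel n p l. tinner n p l A Q \<le> tinner n p l A (tprod p l U (ttrans l V)))"
proof -
  note cs = assms(2)[unfolded compact_tsvd_def]
  have HU: "teq p p l (tprod n l (ttrans l U) U) tid" using cs unfolding tStiefel_def by blast
  have HV1: "teq p p l (tprod p l (ttrans l V) V) tid" and HV2: "teq p p l (tprod p l V (ttrans l V)) tid"
    using cs unfolding torthogonal_def by blast+
  have fd: "fdiag p l S" using cs by blast
  have dft: "\<forall>i<p. \<forall>k<l. Im (tdft l S i i k) = 0 \<and> Re (tdft l S i i k) \<ge> 0" using cs by blast
  have HA: "teq n p l A (tprod p l (tprod p l U S) (ttrans l V))" using cs by blast
  define P where "P = tprod p l U (ttrans l V)"
  have UtP: "teq p p l (tprod n l (ttrans l U) P) (ttrans l V)"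
  proof -
    have "teq p p l (tprod n l (ttrans l U) P) (tprod p l (tprod n l (ttrans l U) U) (ttrans l V))"
      unfolding P_def by (rule teq_sym[OF tprod_assoc])
    also have "teq p p l \<dots> (tprod p l tid (ttrans l V))"
      by (rule tprod_cong[OF HU teq_refl])
    also have "teq p p l \<dots> (ttrans l V)" by (rule tid_left)
    finally show ?thesis .
  qed
  have part1: "teq p p l (tprod n l (ttrans l P) P) tid"
  proof -
    have "teq p p l (tprod n l (ttrans l P) P) (tprod n l (tprod p l (ttrans l (ttrans l V)) (ttrans l U)) P)"
      unfolding P_def by (rule tprod_cong[OF ttrans_tprod teq_refl])
    also have "teq p p l \<dots> (tprod p l (ttrans l (ttrans l V)) (tprod n l (ttrans l U) P))"
      by (rule tprod_assoc)
    also have "teq p p l \<dots> (tprod p l V (ttrans l V))"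
      by (rule tprod_cong[OF ttrans_ttrans UtP])
    also have "teq p p l \<dots> tid" by (rule HV2)
    finally show ?thesis .
  qed
  have G: "tinner n p l A Q = tinner p p l S (tprod n l (ttrans l U) (tprod p l Q V))" for Q
  proof -
    have "tinner n p l A Q = tinner n p l (tprod p l (tprod p l U S) (ttrans l V)) Q"
      by (rule tinner_cong[OF HA teq_refl])
    also have "\<dots> = tinner n p l (tprod p l U S) (tprod p l Q (ttrans l (ttrans l V)))"
      by (rule adj1)
    also have "\<dots> = tinner n p l (tprod p l U S) (tprod p l Q V)"
      by (rule tinner_cong[OF teq_refl tprod_cong[OF teq_refl ttrans_ttrans]])
    also have "\<dots> = tinner p p l S (tprod n l (ttrans l U) (tprod p l Q V))"
      by (rule adj2)
    finally show ?thesis .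
  qed
  have PV: "teq n p l (tprod p l P V) U"
  proof -
    have "teq n p l (tprod p l P V) (tprod p l U (tprod p l (ttrans l V) V))"
      unfolding P_def by (rule tprod_assoc)
    also have "teq n p l \<dots> (tprod p l U tid)" by (rule tprod_cong[OF teq_refl HV1])
    also have "teq n p l \<dots> U" by (rule tid_right)
    finally show ?thesis .
  qed
  have AP: "tinner n p l A P = tinner p p l S tid"
  proof -
    have "teq p p l (tprod n l (ttrans l U) (tprod p l P V)) tid"
      using tprod_cong[OF teq_refl PV] HU by (rule teq_trans)
    then show ?thesis unfolding G by (rule tinner_cong[OF teq_refl])
  qed
  have part2: "tinner n p l A Q \<le> tinner n p l A P" if Q: "Q \<in> tStiefel n p l" for Q
  proof -
    have HQ: "teq p p l (tprod n l (ttrans l Q) Q) tid" using Q unfolding tStiefel_def by blast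
    have sym: "teq p p l (ttrans l S) S" by (rule tsym[OF fd dft])
    define X where "X = ttrans l U"
    define Y where "Y = tprod p l (ttrans l V) (ttrans l Q)"
    have YT: "teq n p l (ttrans l Y) (tprod p l Q V)"
    proof -
      have "teq n p l (ttrans l Y) (tprod p l (ttrans l (ttrans l Q)) (ttrans l (ttrans l V)))"
        unfolding Y_def by (rule ttrans_tprod)
      also have "teq n p l \<dots> (tprod p l Q V)" by (rule tprod_cong[OF ttrans_ttrans ttrans_ttrans])
      finally show ?thesis .
    qed
    have XX: "tinner p n l (tprod p l S X) X = tinner p p l S tid"
    proof -
      have "tinner p n l (tprod p l S X) X = tinner p p l S (tprod n l X (ttrans l X))" by (rule adj1)
      also have "\<dots> = tinner p p l S tid"
      proof (rule tinner_cong[OF teq_refl])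
        have "teq p p l (tprod n l X (ttrans l X)) (tprod n l (ttrans l U) U)"
          unfolding X_def by (rule tprod_cong[OF teq_refl ttrans_ttrans])
        also have "teq p p l \<dots> tid" by (rule HU)
        finally show "teq p p l (tprod n l X (ttrans l X)) tid" .
      qed
      finally show ?thesis .
    qed
    have YY: "tinner p n l (tprod p l S Y) Y = tinner p p l S tid"
    proof -
      have "tinner p n l (tprod p l S Y) Y = tinner p p l S (tprod n l Y (ttrans l Y))" by (rule adj1)
      also have "\<dots> = tinner p p l S tid"
      proof (rule tinner_cong[OF teq_refl])
        have "teq p p l (tprod n l Y (ttrans l Y)) (tprod n l Y (tprod p l Q V))"
          by (rule tprod_cong[OF teq_refl YT])
        also have "teq p p l \<dots> (tprod p l (ttrans l V) (tprod n l (ttrans l Q) (tprod p l Q V)))"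
          unfolding Y_def by (rule tprod_assoc)
        also have "teq p p l \<dots> (tprod p l (ttrans l V) (tprod p l (tprod n l (ttrans l Q) Q) V))"
          by (rule tprod_cong[OF teq_refl teq_sym[OF tprod_assoc]])
        also have "teq p p l \<dots> (tprod p l (ttrans l V) (tprod p l tid V))"
          by (rule tprod_cong[OF teq_refl tprod_cong[OF HQ teq_refl]])
        also have "teq p p l \<dots> (tprod p l (ttrans l V) V)"
          by (rule tprod_cong[OF teq_refl tid_left])
        also have "teq p p l \<dots> tid" by (rule HV1)
        finally show "teq p p l (tprod n l Y (ttrans l Y)) tid" .
      qed
      finally show ?thesis .
    qed
    have YX: "tinner p n l (tprod p l S Y) X = tinner n p l A Q"
    proof -
      have "tinner p n l (tprod p l S Y) X = tinner p p l S (tprod n l X (ttrans l Y))" by (rule adj1)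
      also have "\<dots> = tinner p p l S (tprod n l (ttrans l U) (tprod p l Q V))"
        unfolding X_def by (rule tinner_cong[OF teq_refl tprod_cong[OF teq_refl YT]])
      also have "\<dots> = tinner n p l A Q" by (rule G[symmetric])
      finally show ?thesis .
    qed
    have XY: "tinner p n l (tprod p l S X) Y = tinner p n l (tprod p l S Y) X"
    proof -
      have "tinner p n l (tprod p l S X) Y = tinner p n l X (tprod p l (ttrans l S) Y)" by (rule adj2)
      also have "\<dots> = tinner p n l X (tprod p l S Y)"
        by (rule tinner_cong[OF teq_refl tprod_cong[OF sym teq_refl]])
      also have "\<dots> = tinner p n l (tprod p l S Y) X" by (rule tinner_comm)
      finally show ?thesis .
    qed
    have "0 \<le> tinner p n l (tprod p l S (tsub X Y)) (tsub X Y)" by (rule tpsd[OF fd dft])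
    also have "\<dots> = tinner p n l (tprod p l S X) X - tinner p n l (tprod p l S X) Y
                     - (tinner p n l (tprod p l S Y) X - tinner p n l (tprod p l S Y) Y)"
      by (simp add: tprod_sub_right tinner_sub_left tinner_sub_right)
    also have "\<dots> = 2 * tinner p p l S tid - 2 * tinner n p l A Q"
      using XX YY YX XY by simp
    finally show ?thesis using AP by simp
  qed
  show ?thesis
    using part1 part2 unfolding P_def tStiefel_def by blast
qed

end
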